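(* Let $Q\ge2$, $\kappa\ge1$, and let $\mathbf p_{ql}=\mathbf p_{lq}=(p_{ql}(1),\dots,p_{ql}(\kappa))$, $1\le q\le l\le Q$, be probability vectors that are linearly independent in $\mathbb R^\kappa$. Let $A$ be the $Q^3\times\kappa^3$ matrix with rows indexed by $(z_1,z_2,z_3)\in\{1,\dots,Q\}^3$, columns indexed by $(x_{12},x_{13},x_{23})\in\{1,\dots,\kappa\}^3$, and entries $$A_{(z_1,z_2,z_3),(x_{12},x_{13},x_{23})}=p_{z_1z_2}(x_{12})\,p_{z_1z_3}(x_{13})\,p_{z_2z_3}(x_{23}).$$ Then $A$ has full row rank $Q^3$.
   Context: In the $\kappa$-state random graph mixture model, $A$ is the matrix of conditional probabilities of the edge states on the complete graph on $3$ nodes given the latent groups of the $3$ nodes, with $p_{ql}(k)=\mathbb P(X_{ij}=k\mid Z_i=q,Z_j=l)$. *)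

theory Defs
  imports "HOL-Analysis.Analysis"
begin

text \<open>The latent groups {1..Q} are represented by a finite type 'q (Q = CARD('q)),
  the edge states {1..kappa} by a finite type 'k (kappa = CARD('k)).
  p q l is the probability vector p_{ql} in real^'k.\<close>

definition mixture_matrix ::
  "('q::finite \<Rightarrow> 'q \<Rightarrow> real^'k::finite) \<Rightarrow> real^('k \<times> 'k \<times> 'k)^('q \<times> 'q \<times> 'q)" where
  "mixture_matrix p = vec_lambda (\<lambda>(z1, z2, z3). vec_lambda (\<lambda>(x12, x13, x23).
      (p z1 z2 $ x12) * (p z1 z3 $ x13) * (p z2 z3 $ x23)))"

end

theory Submission
  imports Defs
begin

lemma triple_sum:
  fixes f1 f2 f3 :: "'k::finite \<Rightarrow> real"
  shows "(\<Sum>X\<in>(UNIV::('k\<times>'k\<times>'k) set). (case X of (x1,x2,x3) \<Rightarrow> f1 x1 * f2 x2 * f3 x3))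
     = sum f1 UNIV * sum f2 UNIV * sum f3 UNIV"
proof -
  have "sum f1 UNIV * sum f2 UNIV * sum f3 UNIV = (\<Sum>x1\<in>UNIV. \<Sum>x2\<in>UNIV. \<Sum>x3\<in>UNIV. f1 x1 * f2 x2 * f3 x3)"
    by (simp add: sum_distrib_left[symmetric] sum_distrib_right[symmetric] mult.assoc)
  also have "\<dots> = (\<Sum>x1\<in>UNIV. \<Sum>y\<in>(UNIV::('k\<times>'k) set). (case y of (x2,x3) \<Rightarrow> f1 x1 * f2 x2 * f3 x3))"
    by (simp add: sum.cartesian_product)
  also have "\<dots> = (\<Sum>X\<in>(UNIV::('k\<times>'k\<times>'k) set). (case X of (x1,x2,x3) \<Rightarrow> f1 x1 * f2 x2 * f3 x3))"
    by (subst sum.cartesian_product) (simp add: case_prod_unfold)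
  finally show ?thesis by simp
qed

lemma coord:
  fixes v :: "real^'k::finite"
  assumes "independent B" "span B = UNIV"
  shows "representation B v b = (\<Sum>x\<in>UNIV. v$x * representation B (axis x 1) b)"
proof -
  have "v = (\<Sum>x\<in>UNIV. (v$x) *\<^sub>R axis x 1)"
    using basis_expansion[of v] by (simp add: scalar_mult_eq_scaleR)
  then have "representation B v b = representation B (\<Sum>x\<in>UNIV. (v$x) *\<^sub>R axis x 1) b" by simp
  also have "\<dots> = (\<Sum>x\<in>UNIV. representation B ((v$x) *\<^sub>R axis x 1) b)"
    using assms by (simp add: representation_sum)
  also have "\<dots> = (\<Sum>x\<in>UNIV. v$x * representation B (axis x 1) b)"
    using assms by (simp add: representation_scale)
  finally show ?thesis .
qed

theorem lemma5:
  fixes p :: "'q::finite \<Rightarrow> 'q \<Rightarrow> real^'k::finite"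
  assumes Q2: "CARD('q) \<ge> 2"
    and sym: "\<And>q l. p q l = p l q"
    and prob_nonneg: "\<And>q l k. p q l $ k \<ge> 0"
    and prob_sum: "\<And>q l. (\<Sum>k\<in>UNIV. p q l $ k) = 1"
    and distinct: "\<And>q l q' l'. p q l = p q' l' \<Longrightarrow> {q, l} = {q', l'}"
    and indep: "independent (range (\<lambda>(q, l). p q l))"
  shows "rank (mixture_matrix p) = CARD('q) ^ 3"
proof -
  define S where "S = range (\<lambda>(q, l). p q l)"
  define B where "B = extend_basis S"
  have SB: "S \<subseteq> B" and iB: "independent B" and sB: "span B = UNIV"
    using indep unfolding B_def S_def
    by (auto simp: extend_basis_superset independent_extend_basis)
  define R where "R v b = representation B v b" for v b
  have pS: "p q l \<in> B" for q l using SB unfolding S_def by auto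
  have Rp: "R (p q l) (p q' l') = (if {q,l} = {q',l'} then 1 else 0)" for q l q' l'
  proof -
    have "R (p q l) (p q' l') = (if p q' l' = p q l then 1 else 0)"
      unfolding R_def using representation_basis[OF iB pS] by simp
    moreover have "p q' l' = p q l \<longleftrightarrow> {q,l} = {q',l'}"
      using distinct sym by (metis doubleton_eq_iff)
    ultimately show ?thesis by simp
  qed
  have Rc: "R v b = (\<Sum>x\<in>UNIV. v$x * R (axis x 1) b)" for v b
    unfolding R_def using coord[OF iB sB] .
  let ?A = "mixture_matrix p"
  have Aent: "?A $ (z1,z2,z3) $ (x1,x2,x3) = p z1 z2 $ x1 * p z1 z3 $ x2 * p z2 z3 $ x3"
    for z1 z2 z3 x1 x2 x3 by (simp add: mixture_matrix_def)
  have ker: "c = 0" if c: "transpose ?A *v c = 0" for c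
  proof -
    have "c $ z0 = 0" for z0
    proof -
      obtain a b d where z0: "z0 = (a,b,d)" by (cases z0) auto
      define g1 where "g1 x = R (axis x 1) (p a b)" for x
      define g2 where "g2 x = R (axis x 1) (p a d)" for x
      define g3 where "g3 x = R (axis x 1) (p b d)" for x
      have "0 = (\<Sum>X\<in>UNIV. (transpose ?A *v c) $ X * (case X of (x1,x2,x3) \<Rightarrow> g1 x1 * g2 x2 * g3 x3))"
        using c by simp
      also have "\<dots> = (\<Sum>X\<in>UNIV. \<Sum>z\<in>UNIV. c $ z * (?A $ z $ X * (case X of (x1,x2,x3) \<Rightarrow> g1 x1 * g2 x2 * g3 x3)))"
        by (simp add: matrix_vector_mult_def transpose_def sum_distrib_right mult.assoc mult.left_commute)
      also have "\<dots> = (\<Sum>z\<in>UNIV. c $ z * (\<Sum>X\<in>UNIV. ?A $ z $ X * (case X of (x1,x2,x3) \<Rightarrow> g1 x1 * g2 x2 * g3 x3)))"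
        by (subst sum.swap) (simp add: sum_distrib_left)
      also have "\<dots> = (\<Sum>z\<in>UNIV. c $ z * (case z of (z1,z2,z3) \<Rightarrow>
             R (p z1 z2) (p a b) * R (p z1 z3) (p a d) * R (p z2 z3) (p b d)))"
      proof (rule sum.cong[OF refl])
        fix z :: "'q\<times>'q\<times>'q"
        obtain z1 z2 z3 where z: "z = (z1,z2,z3)" by (cases z) auto
        have "(\<Sum>X\<in>UNIV. ?A $ z $ X * (case X of (x1,x2,x3) \<Rightarrow> g1 x1 * g2 x2 * g3 x3))
          = (\<Sum>X\<in>(UNIV::('k\<times>'k\<times>'k) set). (case X of (x1,x2,x3) \<Rightarrow> (p z1 z2 $ x1 * g1 x1) * (p z1 z3 $ x2 * g2 x2) * (p z2 z3 $ x3 * g3 x3)))"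
          by (rule sum.cong[OF refl]) (auto simp: z Aent split: prod.splits)
        also have "\<dots> = R (p z1 z2) (p a b) * R (p z1 z3) (p a d) * R (p z2 z3) (p b d)"
          by (subst triple_sum) (simp add: Rc[of "p z1 z2"] Rc[of "p z1 z3"] Rc[of "p z2 z3"] g1_def g2_def g3_def)
        finally show "c $ z * (\<Sum>X\<in>UNIV. ?A $ z $ X * (case X of (x1,x2,x3) \<Rightarrow> g1 x1 * g2 x2 * g3 x3))
          = c $ z * (case z of (z1,z2,z3) \<Rightarrow> R (p z1 z2) (p a b) * R (p z1 z3) (p a d) * R (p z2 z3) (p b d))"
          by (simp add: z)
      qed
      also have "\<dots> = (\<Sum>z\<in>UNIV. if z = z0 then c $ z else 0)"
      proof (rule sum.cong[OF refl])
        fix z :: "'q\<times>'q\<times>'q"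
        obtain z1 z2 z3 where z: "z = (z1,z2,z3)" by (cases z) auto
        have "({z1,z2} = {a,b} \<and> {z1,z3} = {a,d} \<and> {z2,z3} = {b,d}) \<longleftrightarrow> z = z0"
          unfolding z z0 by (auto simp: doubleton_eq_iff)
        then show "c $ z * (case z of (z1,z2,z3) \<Rightarrow> R (p z1 z2) (p a b) * R (p z1 z3) (p a d) * R (p z2 z3) (p b d))
           = (if z = z0 then c $ z else 0)"
          by (auto simp: z Rp)
      qed
      also have "\<dots> = c $ z0" by simp
      finally show ?thesis by simp
    qed
    then show ?thesis by (simp add: vec_eq_iff)
  qed
  have "inj ((*v) (transpose ?A))"
  proof (rule injI)
    fix x y assume "transpose ?A *v x = transpose ?A *v y"
    then have "transpose ?A *v (x - y) = 0" by (simp add: matrix_vector_mult_diff_distrib)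
    then have "x - y = 0" by (rule ker)
    then show "x = y" by simp
  qed
  then have "rank (transpose ?A) = CARD('q\<times>'q\<times>'q)" using full_rank_injective by blast
  then show ?thesis by (simp add: rank_transpose power3_eq_cube)
qed

end
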